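(* Consider a synchronous fully connected network with a source node $0$ and peers $1,\dots,n-1$, with private authenticated point-to-point links, in which up to $t$ nodes (possibly including the source), $t<n/3$, $t\ge 1$, may be faulty and behave arbitrarily. Fix $c$ large enough and fixed publicly known coefficients defining $2(n-1)$ linear maps $y_1,\dots,y_{2(n-1)}:\mathrm{GF}(2^c)^{n-t}\to \mathrm{GF}(2^c)$ such that any $n-t$ of them are linearly independent. Run the following protocol: (Round 1) the source, holding data vector $\tilde x=(x_1,\dots,x_{n-t})\in \mathrm{GF}(2^c)^{n-t}$, sends to each peer $i$ the two packets $y_i(\tilde x)$ and $y_{n-1+i}(\tilde x)$; (Round 2) each peer $i$ sends the packet $y_i$ it received from the source to every other peer. Each fault-free peer, having received its two packets from the source and one packet (claimed to be $y_j$) from each other peer $j$, computes, for every subset of $n-t$ of these $n$ received packets, the solution $\tilde x'$ of the corresponding linear system; it is said to detect misbehavior if these solutions are not all equal (or some system has no solution), and otherwise it decides on the common solution. Then, whatever the faulty nodes do, either at least one fault-free peer detects misbehavior, or all fault-free peers decide on the same vector, and if the source is fault-free this vector equals the source's data vector $\tilde x$.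
   Context: A faulty source may send packets to the peers that are not all values of the maps $y_i$ at a single vector; a faulty peer may forward arbitrary (tampered) packets to other peers. Fault-free nodes follow the protocol exactly. *)

theory Defs
  imports Main
begin

text \<open>Data vectors in GF(2^c)^m are represented as functions nat => 'a that
vanish outside the index range {0..<m}.\<close>

definition vecs :: "nat \<Rightarrow> (nat \<Rightarrow> 'a::zero) set" where
  "vecs m = {x. \<forall>j\<ge>m. x j = 0}"

definition ymap :: "(nat \<Rightarrow> nat \<Rightarrow> 'a::comm_ring_1) \<Rightarrow> nat \<Rightarrow> nat \<Rightarrow> (nat \<Rightarrow> 'a) \<Rightarrow> 'a" where
  "ymap coef m k x = (\<Sum>j<m. coef k j * x j)"

definition maps_lin_indep :: "(nat \<Rightarrow> nat \<Rightarrow> 'a::field) \<Rightarrow> nat \<Rightarrow> nat set \<Rightarrow> bool" where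
  "maps_lin_indep coef m S =
     (\<forall>a. (\<forall>x \<in> vecs m. (\<Sum>k\<in>S. a k * ymap coef m k x) = 0) \<longrightarrow> (\<forall>k\<in>S. a k = 0))"

text \<open>Index set of the n packets received by peer i: y_1..y_{n-1} (y_i from the source,
the others from the peers) and y_{n-1+i} from the source.\<close>

definition recv_idx :: "nat \<Rightarrow> nat \<Rightarrow> nat set" where
  "recv_idx n i = {1..n-1} \<union> {n - 1 + i}"

text \<open>The packet value peer i holds for index k: s1 i, s2 i are the two packets received from
the source (claimed y_i and y_{n-1+i}); r i j is the packet received by i from peer j.\<close>

definition recv_pkt :: "nat \<Rightarrow> (nat \<Rightarrow> 'a) \<Rightarrow> (nat \<Rightarrow> 'a) \<Rightarrow> (nat \<Rightarrow> nat \<Rightarrow> 'a) \<Rightarrow> nat \<Rightarrow> nat \<Rightarrow> 'a" where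
  "recv_pkt n s1 s2 r i k = (if k = i then s1 i else if k = n - 1 + i then s2 i else r i k)"

definition solutions :: "(nat \<Rightarrow> nat \<Rightarrow> 'a::comm_ring_1) \<Rightarrow> nat \<Rightarrow> nat set \<Rightarrow> (nat \<Rightarrow> 'a) \<Rightarrow> (nat \<Rightarrow> 'a) set" where
  "solutions coef m S p = {x \<in> vecs m. \<forall>k\<in>S. ymap coef m k x = p k}"

definition decides :: "(nat \<Rightarrow> nat \<Rightarrow> 'a::comm_ring_1) \<Rightarrow> nat \<Rightarrow> nat \<Rightarrow> (nat \<Rightarrow> 'a) \<Rightarrow> (nat \<Rightarrow> 'a)
    \<Rightarrow> (nat \<Rightarrow> nat \<Rightarrow> 'a) \<Rightarrow> nat \<Rightarrow> (nat \<Rightarrow> 'a) \<Rightarrow> bool" where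
  "decides coef n t s1 s2 r i v =
     (\<forall>S. S \<subseteq> recv_idx n i \<and> card S = n - t \<longrightarrow>
          solutions coef (n - t) S (recv_pkt n s1 s2 r i) = {v})"

text \<open>Peer i detects misbehavior: the solutions are not all equal, or some system has no
(unique) solution, i.e. there is no common solution to decide on.\<close>

definition detects :: "(nat \<Rightarrow> nat \<Rightarrow> 'a::comm_ring_1) \<Rightarrow> nat \<Rightarrow> nat \<Rightarrow> (nat \<Rightarrow> 'a) \<Rightarrow> (nat \<Rightarrow> 'a)
    \<Rightarrow> (nat \<Rightarrow> nat \<Rightarrow> 'a) \<Rightarrow> nat \<Rightarrow> bool" where
  "detects coef n t s1 s2 r i = (\<not> (\<exists>v. decides coef n t s1 s2 r i v))"

end

theory Submission
  imports Defs
begin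

lemma sol_cong:
  assumes "\<forall>k\<in>S. p k = q k"
  shows "solutions coef m S p = solutions coef m S q"
  using assms unfolding solutions_def by auto

lemma dec_eq_x:
  assumes "decides coef n t s1 s2 r i v" "S \<subseteq> recv_idx n i" "card S = n - t"
    "\<forall>k\<in>S. recv_pkt n s1 s2 r i k = ymap coef (n - t) k x" "x \<in> vecs (n - t)"
  shows "v = x"
proof -
  have "solutions coef (n - t) S (recv_pkt n s1 s2 r i) = {v}"
    using assms(1-3) unfolding decides_def by blast
  moreover have "x \<in> solutions coef (n - t) S (recv_pkt n s1 s2 r i)"
    using assms(4,5) unfolding solutions_def by auto
  ultimately show ?thesis by auto
qed

lemma dec_eq:
  assumes "decides coef n t s1 s2 r i v" "decides coef n t s1 s2 r j w"
    "S \<subseteq> recv_idx n i" "S \<subseteq> recv_idx n j" "card S = n - t"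
    "\<forall>k\<in>S. recv_pkt n s1 s2 r i k = recv_pkt n s1 s2 r j k"
  shows "v = w"
proof -
  have "solutions coef (n - t) S (recv_pkt n s1 s2 r i) = {v}"
    using assms(1,3,5) unfolding decides_def by blast
  moreover have "solutions coef (n - t) S (recv_pkt n s1 s2 r j) = {w}"
    using assms(2,4,5) unfolding decides_def by blast
  moreover have "solutions coef (n - t) S (recv_pkt n s1 s2 r i) = solutions coef (n - t) S (recv_pkt n s1 s2 r j)"
    using sol_cong assms(6) by blast
  ultimately show ?thesis by auto
qed

theorem theorem1:
  fixes coef :: "nat \<Rightarrow> nat \<Rightarrow> 'a::{field,finite}"
    and n t c :: nat
    and F :: "nat set"
    and x :: "nat \<Rightarrow> 'a"
    and s1 s2 :: "nat \<Rightarrow> 'a"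
    and r :: "nat \<Rightarrow> nat \<Rightarrow> 'a"
  assumes field_card: "card (UNIV :: 'a set) = 2 ^ c"
    and t_pos: "1 \<le> t"
    and t_bound: "3 * t < n"
    and F_nodes: "F \<subseteq> {0..<n}"
    and F_card: "card F \<le> t"
    and indep: "\<forall>S. S \<subseteq> {1..2 * (n - 1)} \<and> card S = n - t \<longrightarrow> maps_lin_indep coef (n - t) S"
    and x_vec: "x \<in> vecs (n - t)"
    and source_ok: "0 \<notin> F \<longrightarrow>
          (\<forall>i\<in>{1..<n}. s1 i = ymap coef (n - t) i x \<and> s2 i = ymap coef (n - t) (n - 1 + i) x)"
    and peers_ok: "\<forall>j\<in>{1..<n} - F. \<forall>i\<in>{1..<n}. i \<noteq> j \<longrightarrow> r i j = s1 j"
  shows "(\<exists>i\<in>{1..<n} - F. detects coef n t s1 s2 r i)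
       \<or> (\<exists>v. (\<forall>i\<in>{1..<n} - F. decides coef n t s1 s2 r i v) \<and> (0 \<notin> F \<longrightarrow> v = x))"
proof (cases "\<exists>i\<in>{1..<n} - F. detects coef n t s1 s2 r i")
  case True then show ?thesis by blast
next
  case False
  define P where "P = {1..<n} - F"
  have finF: "finite F" using F_nodes finite_subset by blast
  have dec: "\<forall>i\<in>P. \<exists>v. decides coef n t s1 s2 r i v"
    using False unfolding P_def detects_def by blast
  have pkt: "\<forall>i\<in>P. \<forall>k\<in>P. recv_pkt n s1 s2 r i k = s1 k"
    using peers_ok t_bound unfolding P_def recv_pkt_def by auto
  have PR: "\<And>i. P \<subseteq> recv_idx n i" unfolding P_def recv_idx_def by auto
  have cardP: "card P \<ge> n - 1 - card (F \<inter> {1..<n})"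
  proof -
    have "P = {1..<n} - (F \<inter> {1..<n})" unfolding P_def by auto
    hence "card P = card {1..<n} - card (F \<inter> {1..<n})"
      by (simp add: card_Diff_subset)
    thus ?thesis by simp
  qed
  show ?thesis
  proof (cases "0 \<in> F")
    case True
    have "F \<inter> {1..<n} \<subseteq> F - {0}" by auto
    hence "card (F \<inter> {1..<n}) \<le> card (F - {0})" using finF by (simp add: card_mono)
    also have "\<dots> = card F - 1" using True finF by simp
    finally have "card (F \<inter> {1..<n}) \<le> t - 1" using F_card by linarith
    hence cP: "card P \<ge> n - t" using cardP t_pos t_bound by linarith
    obtain S where S: "S \<subseteq> P" "card S = n - t"
      using obtain_subset_with_card_n[OF cP] by blast
    show ?thesis
    proof (cases "P = {}")
      case True then show ?thesis unfolding P_def using \<open>0 \<in> F\<close> by auto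
    next
      case False
      then obtain i0 where i0: "i0 \<in> P" by blast
      then obtain v where v: "decides coef n t s1 s2 r i0 v" using dec by blast
      have "\<forall>i\<in>P. decides coef n t s1 s2 r i v"
      proof
        fix i assume i: "i \<in> P"
        then obtain w where w: "decides coef n t s1 s2 r i w" using dec by blast
        have "v = w"
          apply (rule dec_eq[OF v w, of S])
          using S PR pkt i i0 by auto
        thus "decides coef n t s1 s2 r i v" using w by simp
      qed
      thus ?thesis unfolding P_def using \<open>0 \<in> F\<close> by auto
    qed
  next
    case False
    have "F \<inter> {1..<n} = F" using False F_nodes by (auto simp: subset_iff; metis atLeastLessThan_iff gr0I Suc_leI)
    hence "card P \<ge> n - 1 - t" using cardP F_card by simp
    have "\<forall>i\<in>P. decides coef n t s1 s2 r i x"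
    proof
      fix i assume i: "i \<in> P"
      then obtain w where w: "decides coef n t s1 s2 r i w" using dec by blast
      define Q where "Q = insert (n - 1 + i) (P - {i}) \<union> {i}"
      have i1: "1 \<le> i" "i < n" using i unfolding P_def by auto
      have i1: "1 \<le> i" "i < n" using i unfolding P_def by auto
      have "n - 1 + i \<notin> P" using i1 unfolding P_def by auto
      hence "Q = insert (n - 1 + i) P" unfolding Q_def using i by auto
      moreover have "finite P" unfolding P_def by auto
      ultimately have "card Q = card P + 1" using \<open>n - 1 + i \<notin> P\<close> by simp
      hence cQ: "card Q \<ge> n - t" using \<open>card P \<ge> n - 1 - t\<close> t_bound by linarith
      obtain S where S: "S \<subseteq> Q" "card S = n - t"
        using obtain_subset_with_card_n[OF cQ] by blast
      have QR: "Q \<subseteq> recv_idx n i" using PR i1 unfolding \<open>Q = insert (n - 1 + i) P\<close> recv_idx_def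
        by auto
      have "\<forall>k\<in>Q. recv_pkt n s1 s2 r i k = ymap coef (n - t) k x"
      proof
        fix k assume k: "k \<in> Q"
        show "recv_pkt n s1 s2 r i k = ymap coef (n - t) k x"
        proof (cases "k = n - 1 + i")
          case True
          then show ?thesis using source_ok False i1 t_bound unfolding recv_pkt_def by auto
        next
          case False
          hence "k \<in> P" using k \<open>Q = insert (n - 1 + i) P\<close> by auto
          then show ?thesis using pkt i source_ok \<open>0 \<notin> F\<close> unfolding P_def by auto
        qed
      qed
      hence "w = x" using dec_eq_x[OF w, of S x] S QR x_vec by auto
      thus "decides coef n t s1 s2 r i x" using w by simp
    qed
    thus ?thesis unfolding P_def by auto
  qed
qed

end
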